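(* Let $X$ be a random variable taking values in a set $\mathcal{X}$, $Y \in [0,1]$ a target outcome, and $H$ a random variable (expert feedback) taking values in an arbitrary domain $\mathcal{H}$, all jointly distributed. Let $\mathcal{F}$ be a class of functions $\mathcal{X} \to [0,1]$, $\alpha \ge 0$, and let $S \subseteq \mathcal{X}$ be $\alpha$-indistinguishable with respect to $\mathcal{F}$ and $Y$. Let $g : \mathcal{H} \to [0,1]$ satisfy, for some $\eta \ge 0$ and all $\beta, \gamma \in \mathbb{R}$, $$\mathbb{E}_S[(Y - g(H))^2] \le \mathbb{E}_S[(Y - \gamma - \beta g(H))^2] + \eta.$$ Then for every $f \in \mathcal{F}$, $$\mathbb{E}_S[(Y - g(H))^2] + 4\,\mathrm{Cov}_S(Y, g(H))^2 \le \mathbb{E}_S[(Y - f(X))^2] + 2\alpha + \eta.$$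
   Context: For $S \subseteq \mathcal{X}$ with $\mathbb{P}(X \in S) > 0$, $\mathbb{E}_S$ and $\mathrm{Cov}_S$ denote expectation and covariance conditional on $\{X \in S\}$. A set $S \subseteq \mathcal{X}$ is $\alpha$-indistinguishable with respect to $\mathcal{F}$ and $Y$ if $|\mathrm{Cov}(f(X), Y \mid X \in S)| \le \alpha$ for all $f \in \mathcal{F}$. *)

theory Defs
  imports "HOL-Probability.Probability"
begin

definition cond_exp_on :: "'a measure \<Rightarrow> 'a set \<Rightarrow> ('a \<Rightarrow> real) \<Rightarrow> real" where
  "cond_exp_on M A Z = (\<integral>\<omega>. indicator A \<omega> * Z \<omega> \<partial>M) / measure M A"

definition cond_cov_on :: "'a measure \<Rightarrow> 'a set \<Rightarrow> ('a \<Rightarrow> real) \<Rightarrow> ('a \<Rightarrow> real) \<Rightarrow> real" where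
  "cond_cov_on M A Z W =
     cond_exp_on M A (\<lambda>\<omega>. Z \<omega> * W \<omega>) - cond_exp_on M A Z * cond_exp_on M A W"

definition indistinguishable ::
  "'a measure \<Rightarrow> ('a \<Rightarrow> 'x) \<Rightarrow> ('a \<Rightarrow> real) \<Rightarrow> ('x \<Rightarrow> real) set \<Rightarrow> real \<Rightarrow> 'x set \<Rightarrow> bool" where
  "indistinguishable M X Y F \<alpha> S \<longleftrightarrow>
     (\<forall>f\<in>F. \<bar>cond_cov_on M (X -` S \<inter> space M) (\<lambda>\<omega>. f (X \<omega>)) Y\<bar> \<le> \<alpha>)"

end

theory Submission
  imports Defs
begin

definition bnd :: "'a measure \<Rightarrow> ('a \<Rightarrow> real) \<Rightarrow> bool" where
  "bnd M Z \<longleftrightarrow> Z \<in> borel_measurable M \<and> (\<exists>B. \<forall>\<omega>\<in>space M. \<bar>Z \<omega>\<bar> \<le> B)"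

lemma bnd_const: "bnd M (\<lambda>\<omega>. c)"
  unfolding bnd_def by auto

lemma bnd_add: "bnd M Z \<Longrightarrow> bnd M W \<Longrightarrow> bnd M (\<lambda>\<omega>. Z \<omega> + W \<omega>)"
  unfolding bnd_def
proof (elim conjE exE, intro conjI)
  fix B C assume "\<forall>\<omega>\<in>space M. \<bar>Z \<omega>\<bar> \<le> B" "\<forall>\<omega>\<in>space M. \<bar>W \<omega>\<bar> \<le> C"
  then show "\<exists>B. \<forall>\<omega>\<in>space M. \<bar>Z \<omega> + W \<omega>\<bar> \<le> B"
    by (intro exI[of _ "B + C"]) (auto intro: order.trans[OF abs_triangle_ineq] add_mono)
qed auto

lemma bnd_diff: "bnd M Z \<Longrightarrow> bnd M W \<Longrightarrow> bnd M (\<lambda>\<omega>. Z \<omega> - W \<omega>)"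
  unfolding bnd_def
proof (elim conjE exE, intro conjI)
  fix B C assume "\<forall>\<omega>\<in>space M. \<bar>Z \<omega>\<bar> \<le> B" "\<forall>\<omega>\<in>space M. \<bar>W \<omega>\<bar> \<le> C"
  then show "\<exists>B. \<forall>\<omega>\<in>space M. \<bar>Z \<omega> - W \<omega>\<bar> \<le> B"
    by (intro exI[of _ "B + C"]) (auto intro: order.trans[OF abs_triangle_ineq4] add_mono)
qed auto

lemma bnd_mult: "bnd M Z \<Longrightarrow> bnd M W \<Longrightarrow> bnd M (\<lambda>\<omega>. Z \<omega> * W \<omega>)"
  unfolding bnd_def
proof (elim conjE exE, intro conjI)
  fix B C assume b: "\<forall>\<omega>\<in>space M. \<bar>Z \<omega>\<bar> \<le> B" "\<forall>\<omega>\<in>space M. \<bar>W \<omega>\<bar> \<le> C"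
  show "\<exists>B. \<forall>\<omega>\<in>space M. \<bar>Z \<omega> * W \<omega>\<bar> \<le> B"
  proof (intro exI[of _ "B * C"] ballI)
    fix \<omega> assume "\<omega> \<in> space M"
    then have "\<bar>Z \<omega>\<bar> \<le> B" "\<bar>W \<omega>\<bar> \<le> C" using b by auto
    then show "\<bar>Z \<omega> * W \<omega>\<bar> \<le> B * C"
      unfolding abs_mult by (intro mult_mono) auto
  qed
qed auto

lemma vlem: "(b::real) \<le> x \<Longrightarrow> b - x\<^sup>2 \<le> 1/4"
proof -
  assume "b \<le> x"
  moreover have "0 \<le> (x - 1/2)\<^sup>2" by simp
  moreover have "(x - 1/2)\<^sup>2 = x\<^sup>2 - x + 1/4" by (simp add: power2_eq_square field_simps)
  ultimately show ?thesis by linarith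
qed

context
  fixes M :: "'a measure" and A :: "'a set"
  assumes P: "prob_space M" and A: "A \<in> sets M"
begin

lemma bnd_int: "bnd M Z \<Longrightarrow> integrable M (\<lambda>\<omega>. indicator A \<omega> * Z \<omega>)"
  unfolding bnd_def
proof (elim conjE exE)
  fix B assume m: "Z \<in> borel_measurable M" and b: "\<forall>\<omega>\<in>space M. \<bar>Z \<omega>\<bar> \<le> B"
  interpret prob_space M by (rule P)
  show ?thesis
  proof (rule integrable_const_bound[where B=B])
    show "AE x in M. norm (indicator A x * Z x) \<le> B"
      using b by (intro AE_I2) (auto simp: indicator_def abs_mult order.trans[OF _ b[rule_format]])
    show "(\<lambda>\<omega>. indicator A \<omega> * Z \<omega>) \<in> borel_measurable M"
      using m A by measurable
  qed
qed

lemma E_add: "bnd M Z \<Longrightarrow> bnd M W \<Longrightarrow>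
  cond_exp_on M A (\<lambda>\<omega>. Z \<omega> + W \<omega>) = cond_exp_on M A Z + cond_exp_on M A W"
  unfolding cond_exp_on_def
  by (simp add: distrib_left bnd_int add_divide_distrib)

lemma E_diff: "bnd M Z \<Longrightarrow> bnd M W \<Longrightarrow>
  cond_exp_on M A (\<lambda>\<omega>. Z \<omega> - W \<omega>) = cond_exp_on M A Z - cond_exp_on M A W"
  unfolding cond_exp_on_def
  by (simp add: right_diff_distrib bnd_int diff_divide_distrib)

lemma E_cmult: "cond_exp_on M A (\<lambda>\<omega>. c * Z \<omega>) = c * cond_exp_on M A Z"
  unfolding cond_exp_on_def
  by (simp add: mult.left_commute[of _ c])

lemma E_const: "measure M A > 0 \<Longrightarrow> cond_exp_on M A (\<lambda>\<omega>. c) = c"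
  unfolding cond_exp_on_def
proof -
  interpret prob_space M by (rule P)
  assume "measure M A > 0"
  then show "(\<integral>\<omega>. indicator A \<omega> * c \<partial>M) / measure M A = c"
    using A by simp
qed

lemma E_nonneg: "(\<And>\<omega>. \<omega> \<in> space M \<Longrightarrow> Z \<omega> \<ge> 0) \<Longrightarrow> cond_exp_on M A Z \<ge> 0"
  unfolding cond_exp_on_def
  by (intro divide_nonneg_nonneg integral_nonneg) (auto simp: indicator_def)

end

theorem corollary1:
  fixes M :: "'a measure" and MX :: "'x measure" and MH :: "'h measure"
    and X :: "'a \<Rightarrow> 'x" and Y :: "'a \<Rightarrow> real" and H :: "'a \<Rightarrow> 'h"
    and F :: "('x \<Rightarrow> real) set" and g :: "'h \<Rightarrow> real"
    and S :: "'x set" and \<alpha> \<eta> :: real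
  assumes "prob_space M"
    and "X \<in> measurable M MX" and "H \<in> measurable M MH" and "Y \<in> borel_measurable M"
    and "\<And>\<omega>. \<omega> \<in> space M \<Longrightarrow> Y \<omega> \<in> {0..1}"
    and "\<And>f. f \<in> F \<Longrightarrow> f \<in> borel_measurable MX \<and> (\<forall>x\<in>space MX. f x \<in> {0..1})"
    and "\<alpha> \<ge> 0"
    and "S \<in> sets MX" and "measure M (X -` S \<inter> space M) > 0"
    and "indistinguishable M X Y F \<alpha> S"
    and "g \<in> borel_measurable MH" and "\<And>h. h \<in> space MH \<Longrightarrow> g h \<in> {0..1}"
    and "\<eta> \<ge> 0"
    and "\<And>\<beta> \<gamma>. cond_exp_on M (X -` S \<inter> space M) (\<lambda>\<omega>. (Y \<omega> - g (H \<omega>))\<^sup>2)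
              \<le> cond_exp_on M (X -` S \<inter> space M) (\<lambda>\<omega>. (Y \<omega> - \<gamma> - \<beta> * g (H \<omega>))\<^sup>2) + \<eta>"
  shows "\<forall>f\<in>F.
    cond_exp_on M (X -` S \<inter> space M) (\<lambda>\<omega>. (Y \<omega> - g (H \<omega>))\<^sup>2)
      + 4 * (cond_cov_on M (X -` S \<inter> space M) Y (\<lambda>\<omega>. g (H \<omega>)))\<^sup>2
    \<le> cond_exp_on M (X -` S \<inter> space M) (\<lambda>\<omega>. (Y \<omega> - f (X \<omega>))\<^sup>2) + 2 * \<alpha> + \<eta>"
proof
  fix f assume fF: "f \<in> F"
  define A where "A = X -` S \<inter> space M"
  have P: "prob_space M" by (rule assms(1))
  have As: "A \<in> sets M" unfolding A_def using assms(2,8) by (rule measurable_sets)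
  have pA: "measure M A > 0" using assms(9) by (simp add: A_def)
  define E where "E = cond_exp_on M A"
  define G where "G = (\<lambda>\<omega>. g (H \<omega>))"
  define Fx where "Fx = (\<lambda>\<omega>. f (X \<omega>))"
  have fm: "f \<in> borel_measurable MX" and fb: "\<And>x. x \<in> space MX \<Longrightarrow> f x \<in> {0..1}"
    using assms(6)[OF fF] by auto
  have Gr: "\<And>\<omega>. \<omega> \<in> space M \<Longrightarrow> G \<omega> \<in> {0..1}"
    unfolding G_def using assms(12) measurable_space[OF assms(3)] by blast
  have Fr: "\<And>\<omega>. \<omega> \<in> space M \<Longrightarrow> Fx \<omega> \<in> {0..1}"
    unfolding Fx_def using fb measurable_space[OF assms(2)] by blast
  have bY: "bnd M Y" unfolding bnd_def using assms(4,5)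
    by (intro conjI exI[of _ 1]) auto
  have bG: "bnd M G" unfolding bnd_def G_def
  proof (intro conjI exI[of _ 1] ballI)
    show "(\<lambda>\<omega>. g (H \<omega>)) \<in> borel_measurable M" using assms(3,11) by measurable
    fix \<omega> assume "\<omega> \<in> space M" then show "\<bar>g (H \<omega>)\<bar> \<le> 1" using Gr[of \<omega>] by (auto simp: G_def)
  qed
  have bF: "bnd M Fx" unfolding bnd_def Fx_def
  proof (intro conjI exI[of _ 1] ballI)
    show "(\<lambda>\<omega>. f (X \<omega>)) \<in> borel_measurable M" using assms(2) fm by measurable
    fix \<omega> assume "\<omega> \<in> space M" then show "\<bar>f (X \<omega>)\<bar> \<le> 1" using Fr[of \<omega>] by (auto simp: Fx_def)
  qed
  note EA = E_add[OF P As] E_diff[OF P As] E_cmult[OF P As] E_const[OF P As pA]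
  note BB = bnd_add bnd_diff bnd_mult bnd_const bY bG bF
  define L where "L = E (\<lambda>\<omega>. (Y \<omega> - G \<omega>)\<^sup>2)"
  define c where "c = E (\<lambda>\<omega>. Y \<omega> * G \<omega>) - E Y * E G"
  define \<beta> where "\<beta> = 4 * c"
  define \<gamma> where "\<gamma> = E Y - \<beta> * E G"
  have hyp: "L \<le> E (\<lambda>\<omega>. (Y \<omega> - \<gamma> - \<beta> * G \<omega>)\<^sup>2) + \<eta>"
    using assms(14)[of \<gamma> \<beta>] unfolding L_def E_def A_def G_def .
  have "(\<lambda>\<omega>. (Y \<omega> - \<gamma> - \<beta> * G \<omega>)\<^sup>2) = (\<lambda>\<omega>. Y \<omega> * Y \<omega> - (2*\<gamma>) * Y \<omega> - (2*\<beta>) * (Y \<omega> * G \<omega>)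
      + \<gamma>\<^sup>2 + \<beta>\<^sup>2 * (G \<omega> * G \<omega>) + (2*\<gamma>*\<beta>) * G \<omega>)"
    by (rule ext) (simp add: power2_eq_square algebra_simps)
  then have e1: "E (\<lambda>\<omega>. (Y \<omega> - \<gamma> - \<beta> * G \<omega>)\<^sup>2) = E (\<lambda>\<omega>. Y \<omega> * Y \<omega>) - (2*\<gamma>) * E Y - (2*\<beta>) * E (\<lambda>\<omega>. Y \<omega> * G \<omega>)
      + \<gamma>\<^sup>2 + \<beta>\<^sup>2 * E (\<lambda>\<omega>. G \<omega> * G \<omega>) + (2*\<gamma>*\<beta>) * E G"
    unfolding E_def by (simp only: EA BB)
  have "(\<lambda>\<omega>. (Y \<omega> - Fx \<omega>)\<^sup>2) = (\<lambda>\<omega>. Y \<omega> * Y \<omega> - 2 * (Fx \<omega> * Y \<omega>) + Fx \<omega> * Fx \<omega>)"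
    by (rule ext) (simp add: power2_eq_square algebra_simps)
  then have e2: "E (\<lambda>\<omega>. (Y \<omega> - Fx \<omega>)\<^sup>2) = E (\<lambda>\<omega>. Y \<omega> * Y \<omega>) - 2 * E (\<lambda>\<omega>. Fx \<omega> * Y \<omega>) + E (\<lambda>\<omega>. Fx \<omega> * Fx \<omega>)"
    unfolding E_def by (simp only: EA BB)
  have "E (\<lambda>\<omega>. G \<omega> - G \<omega> * G \<omega>) \<ge> 0" unfolding E_def
    by (rule E_nonneg[OF P As]) (use Gr in \<open>force intro: mult_left_le\<close>)
  then have gg: "E (\<lambda>\<omega>. G \<omega> * G \<omega>) \<le> E G"
    unfolding E_def by (simp only: EA BB)
  have "(\<lambda>\<omega>. (Fx \<omega> - E Fx)\<^sup>2) = (\<lambda>\<omega>. Fx \<omega> * Fx \<omega> - (2 * E Fx) * Fx \<omega> + (E Fx)\<^sup>2)"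
    by (rule ext) (simp add: power2_eq_square algebra_simps)
  moreover have "E (\<lambda>\<omega>. (Fx \<omega> - E Fx)\<^sup>2) \<ge> 0" unfolding E_def
    by (rule E_nonneg[OF P As]) simp
  ultimately have "E (\<lambda>\<omega>. Fx \<omega> * Fx \<omega>) - (2 * E Fx) * E Fx + (E Fx)\<^sup>2 \<ge> 0"
    unfolding E_def by (simp only: EA BB)
  then have ff: "E (\<lambda>\<omega>. Fx \<omega> * Fx \<omega>) \<ge> (E Fx)\<^sup>2" by (simp add: power2_eq_square)
  have cov: "\<bar>E (\<lambda>\<omega>. Fx \<omega> * Y \<omega>) - E Fx * E Y\<bar> \<le> \<alpha>"
    using assms(10) fF unfolding indistinguishable_def cond_cov_on_def E_def A_def Fx_def by blast
  have r1: "E (\<lambda>\<omega>. (Y \<omega> - \<gamma> - \<beta> * G \<omega>)\<^sup>2) = (E (\<lambda>\<omega>. Y \<omega> * Y \<omega>) - (E Y)\<^sup>2) - 2 * \<beta> * c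
      + \<beta>\<^sup>2 * (E (\<lambda>\<omega>. G \<omega> * G \<omega>) - (E G)\<^sup>2)"
    unfolding e1 by (simp add: \<gamma>_def c_def power2_eq_square algebra_simps)
  have v: "E (\<lambda>\<omega>. G \<omega> * G \<omega>) - (E G)\<^sup>2 \<le> 1/4"
    using gg vlem by blast
  have "\<beta>\<^sup>2 * (E (\<lambda>\<omega>. G \<omega> * G \<omega>) - (E G)\<^sup>2) \<le> \<beta>\<^sup>2 * (1/4)"
    by (rule mult_left_mono[OF v]) simp
  moreover have "\<beta>\<^sup>2 * (1/4) = 4 * c\<^sup>2" by (simp add: \<beta>_def power2_eq_square)
  moreover have "2 * \<beta> * c = 8 * c\<^sup>2" by (simp add: \<beta>_def power2_eq_square)
  ultimately have r2: "E (\<lambda>\<omega>. (Y \<omega> - \<gamma> - \<beta> * G \<omega>)\<^sup>2) \<le> (E (\<lambda>\<omega>. Y \<omega> * Y \<omega>) - (E Y)\<^sup>2) - 4 * c\<^sup>2"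
    using r1 by linarith
  have sq: "(E Y - E Fx)\<^sup>2 \<ge> 0" by simp
  have fin: "L + 4 * c\<^sup>2 \<le> E (\<lambda>\<omega>. (Y \<omega> - Fx \<omega>)\<^sup>2) + 2 * \<alpha> + \<eta>"
    using hyp r2 e2 ff cov sq unfolding power2_diff by (simp add: power2_eq_square algebra_simps abs_le_iff)
  show "cond_exp_on M (X -` S \<inter> space M) (\<lambda>\<omega>. (Y \<omega> - g (H \<omega>))\<^sup>2)
      + 4 * (cond_cov_on M (X -` S \<inter> space M) Y (\<lambda>\<omega>. g (H \<omega>)))\<^sup>2
    \<le> cond_exp_on M (X -` S \<inter> space M) (\<lambda>\<omega>. (Y \<omega> - f (X \<omega>))\<^sup>2) + 2 * \<alpha> + \<eta>"
    using fin unfolding L_def c_def E_def A_def G_def Fx_def cond_cov_on_def .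
qed

end
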